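(* Let $b_0>0$. There exists $\delta_{11}(b_0)>0$ such that for all $\delta\in(0,\delta_{11})$ there exists $s_{11}(\delta,b_0)\ge1$ such that for all $s_0\ge s_{11}$: if $(q,b)(s)\in V_{\delta,b_0}(s)$ for all $s\in[s_0,\bar s]$, then for all $s\in[s_0,\bar s]$ and $y\in\mathbb R$, $$|P_-(\mathcal M(q))(y,s)|\le CI(s)^{-\delta}\big(I(s)^{-M}+|y|^M\big),$$ where $\mathcal M(q)=\frac p{p-1}y^{2k}(1+e_bq)$ with $b=b(s)$ and $C$ is independent of $s,y,s_0$.
   Context: Fix $p>1$ and an integer $k\ge2$. Let $I(s)=e^{\frac s2(1-\frac1k)}$, $M=\frac{2kp}{p-1}$, $[M]$ the largest integer less than $M$, $e_b(y)=(p-1+by^{2k})^{-1}$. Let $\rho_s(y)=\frac{I(s)}{\sqrt{4\pi}}e^{-I(s)^2y^2/4}$, $\langle f,g\rangle_{L^2_{\rho_s}}=\int fg\rho_s\,dy$, $H_m(y,s)=\sum_{\ell=0}^{[m/2]}\frac{m!}{\ell!(m-2\ell)!}(-I(s)^{-2})^\ell y^{m-2\ell}$; $P_m(g)=\langle g,H_m\rangle_{L^2_{\rho_s}}/\langle H_m,H_m\rangle_{L^2_{\rho_s}}$, $P_-(g)=g-\sum_{m=0}^{[M]}P_m(g)H_m$, $q_m=P_m(q)$, $q_-=P_-(q)$, $|g|_s=\sup_y\frac{|g(y)|}{I(s)^{-M}+|y|^M}$. The shrinking set $V_{\delta,b_0}(s)$ is the set of pairs $(q,b)$ ($q$ with $(1+|y|^M)^{-1}q\in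 L^\infty$, $b\in\mathbb R$) with $|q_m|\le I(s)^{-\delta}$ for $0\le m\le[M]$, $m\ne2k$; $|q_{2k}|\le I(s)^{-2\delta}$; $|q_-|_s\le I(s)^{-\delta}$; and $\frac{b_0}2\le b\le2b_0$. *)

theory Defs
  imports "HOL-Analysis.Analysis"
begin

definition Ifun :: "nat \<Rightarrow> real \<Rightarrow> real" where
  "Ifun k s = exp (s / 2 * (1 - 1 / real k))"

definition Mexp :: "real \<Rightarrow> nat \<Rightarrow> real" where
  "Mexp p k = 2 * real k * p / (p - 1)"

text \<open>[M]: the largest integer strictly less than M (M > 0 here).\<close>
definition Mfloor :: "real \<Rightarrow> nat \<Rightarrow> nat" where
  "Mfloor p k = nat (\<lceil>Mexp p k\<rceil> - 1)"

definition e_b :: "real \<Rightarrow> nat \<Rightarrow> real \<Rightarrow> real \<Rightarrow> real" where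
  "e_b p k b y = 1 / (p - 1 + b * y ^ (2 * k))"

definition rho :: "nat \<Rightarrow> real \<Rightarrow> real \<Rightarrow> real" where
  "rho k s y = Ifun k s / sqrt (4 * pi) * exp (- (Ifun k s)\<^sup>2 * y\<^sup>2 / 4)"

definition inner_rho :: "nat \<Rightarrow> real \<Rightarrow> (real \<Rightarrow> real) \<Rightarrow> (real \<Rightarrow> real) \<Rightarrow> real" where
  "inner_rho k s f g = (LINT y|lborel. f y * g y * rho k s y)"

definition Hpoly :: "nat \<Rightarrow> nat \<Rightarrow> real \<Rightarrow> real \<Rightarrow> real" where
  "Hpoly k m s y = (\<Sum>l = 0..m div 2.
      fact m / (fact l * fact (m - 2 * l)) * (- 1 / (Ifun k s)\<^sup>2) ^ l * y ^ (m - 2 * l))"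

definition Pm :: "nat \<Rightarrow> nat \<Rightarrow> real \<Rightarrow> (real \<Rightarrow> real) \<Rightarrow> real" where
  "Pm k m s g = inner_rho k s g (Hpoly k m s) / inner_rho k s (Hpoly k m s) (Hpoly k m s)"

definition Pminus :: "real \<Rightarrow> nat \<Rightarrow> real \<Rightarrow> (real \<Rightarrow> real) \<Rightarrow> real \<Rightarrow> real" where
  "Pminus p k s g y = g y - (\<Sum>m = 0..Mfloor p k. Pm k m s g * Hpoly k m s y)"

definition wnorm :: "real \<Rightarrow> nat \<Rightarrow> real \<Rightarrow> (real \<Rightarrow> real) \<Rightarrow> ereal" where
  "wnorm p k s g = (SUP y. ereal (\<bar>g y\<bar> / (Ifun k s powr (- Mexp p k) + \<bar>y\<bar> powr Mexp p k)))"

definition admissible :: "real \<Rightarrow> nat \<Rightarrow> (real \<Rightarrow> real) \<Rightarrow> bool" where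
  "admissible p k q \<longleftrightarrow> q \<in> borel_measurable lborel \<and>
     (\<exists>K. AE y in lborel. \<bar>q y\<bar> / (1 + \<bar>y\<bar> powr Mexp p k) \<le> K)"

definition Vset :: "real \<Rightarrow> nat \<Rightarrow> real \<Rightarrow> real \<Rightarrow> real \<Rightarrow> ((real \<Rightarrow> real) \<times> real) set" where
  "Vset p k \<delta> b0 s = {(q, b). admissible p k q \<and>
     (\<forall>m \<le> Mfloor p k. m \<noteq> 2 * k \<longrightarrow> \<bar>Pm k m s q\<bar> \<le> Ifun k s powr (- \<delta>)) \<and>
     \<bar>Pm k (2 * k) s q\<bar> \<le> Ifun k s powr (- 2 * \<delta>) \<and>
     wnorm p k s (Pminus p k s q) \<le> ereal (Ifun k s powr (- \<delta>)) \<and>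
     b0 / 2 \<le> b \<and> b \<le> 2 * b0}"

definition Mcal :: "real \<Rightarrow> nat \<Rightarrow> real \<Rightarrow> (real \<Rightarrow> real) \<Rightarrow> real \<Rightarrow> real" where
  "Mcal p k b q y = p / (p - 1) * y ^ (2 * k) * (1 + e_b p k b y * q y)"

end

theory Submission
  imports Defs "HOL-Probability.Probability" "HOL-Computational_Algebra.Polynomial"
begin

section \<open>Gaussian moments\<close>

definition gmom :: "real \<Rightarrow> nat \<Rightarrow> real" where
  "gmom \<sigma> n = (LINT x|lborel. normal_density 0 \<sigma> x * x ^ n)"

lemma gmom_integrable: "0 < \<sigma> \<Longrightarrow> integrable lborel (\<lambda>x. normal_density 0 \<sigma> x * x ^ n)"
  using integrable_normal_moment[of \<sigma> 0 n] by simp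

lemma gmom_even: "0 < \<sigma> \<Longrightarrow> gmom \<sigma> (2*j) = fact (2 * j) / ((2 / \<sigma>\<^sup>2)^j * fact j)"
  unfolding gmom_def using integral_normal_moment_even[of \<sigma> 0 j] by simp

lemma gmom_odd: "0 < \<sigma> \<Longrightarrow> gmom \<sigma> (2*j+1) = 0"
  unfolding gmom_def using integral_normal_moment_odd[of \<sigma> 0 j] by simp

lemma gmom_0: "0 < \<sigma> \<Longrightarrow> gmom \<sigma> 0 = 1"
  using gmom_even[of \<sigma> 0] by simp

lemma gmom_rec: assumes "0 < \<sigma>" shows "gmom \<sigma> (Suc (Suc n)) = \<sigma>\<^sup>2 * real (Suc n) * gmom \<sigma> n"
proof (cases "even n")
  case True
  then obtain j where n: "n = 2*j" by (auto elim: evenE)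
  have e: "Suc (Suc n) = 2 * Suc j" using n by simp
  show ?thesis unfolding e unfolding n gmom_even[OF assms]
    using assms
    by (simp add: fact_Suc field_simps power_Suc del: of_nat_Suc) (simp add: algebra_simps)
next
  case False
  then obtain j where n: "n = 2*j+1" by (auto elim: oddE)
  have e: "Suc (Suc n) = 2 * Suc j + 1" using n by simp
  show ?thesis unfolding e unfolding n gmom_odd[OF assms] by simp
qed

definition Eg :: "real \<Rightarrow> real poly \<Rightarrow> real" where
  "Eg \<sigma> p = (LINT x|lborel. poly p x * normal_density 0 \<sigma> x)"

lemma Eg_integrable: assumes "0 < \<sigma>" shows "integrable lborel (\<lambda>x. poly p x * normal_density 0 \<sigma> x)"
proof -
  have "(\<lambda>x. poly p x * normal_density 0 \<sigma> x) = (\<lambda>x. \<Sum>i\<le>degree p. coeff p i * (normal_density 0 \<sigma> x * x ^ i))"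
    by (auto simp: poly_altdef sum_distrib_right sum_distrib_left ac_simps)
  moreover have "integrable lborel (\<lambda>x. \<Sum>i\<le>degree p. coeff p i * (normal_density 0 \<sigma> x * x ^ i))"
    by (rule Bochner_Integration.integrable_sum, rule Bochner_Integration.integrable_mult_right, rule gmom_integrable[OF assms])
  ultimately show ?thesis by simp
qed

lemma Eg_add: "0 < \<sigma> \<Longrightarrow> Eg \<sigma> (p + q) = Eg \<sigma> p + Eg \<sigma> q"
  unfolding Eg_def using Eg_integrable[of \<sigma> p] Eg_integrable[of \<sigma> q]
  by (simp add: distrib_right)

lemma Eg_0[simp]: "Eg \<sigma> 0 = 0"
  unfolding Eg_def by simp

lemma Eg_smult: "Eg \<sigma> (smult c p) = c * Eg \<sigma> p"
  unfolding Eg_def by (simp add: mult.assoc)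

lemma Eg_sum: "0 < \<sigma> \<Longrightarrow> Eg \<sigma> (\<Sum>i\<in>A. f i) = (\<Sum>i\<in>A. Eg \<sigma> (f i))"
proof (induction A rule: infinite_finite_induct)
  case (infinite A) then show ?case by (simp add: Eg_def)
next
  case empty then show ?case by (simp add: Eg_def)
next
  case (insert x F) then show ?case by (simp add: Eg_add)
qed

lemma Eg_monom: "Eg \<sigma> (monom c n) = c * gmom \<sigma> n"
  unfolding Eg_def gmom_def by (simp add: poly_monom ac_simps)

lemma Eg_const: "0 < \<sigma> \<Longrightarrow> Eg \<sigma> [:c:] = c"
  using Eg_monom[of \<sigma> c 0] gmom_0[of \<sigma>] by (simp add: monom_0)

lemma pCons0_sum: "pCons 0 (\<Sum>i\<in>A. f i) = (\<Sum>i\<in>A. pCons 0 (f i))"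
  by (induction A rule: infinite_finite_induct) (auto, metis add_pCons add_0)

lemma pderiv_sum': "pderiv (\<Sum>i\<in>A. f i) = (\<Sum>i\<in>A. pderiv (f i))"
  by (induction A rule: infinite_finite_induct) (auto simp: pderiv_add)

lemma Eg_stein: assumes "0 < \<sigma>" shows "Eg \<sigma> (pCons 0 p) = \<sigma>\<^sup>2 * Eg \<sigma> (pderiv p)"
proof -
  have mono: "Eg \<sigma> (pCons 0 (monom c i)) = \<sigma>\<^sup>2 * Eg \<sigma> (pderiv (monom c i))" for c i
  proof (cases i)
    case 0 then show ?thesis
      using gmom_odd[OF assms, of 0]
      by (simp add: monom_Suc[symmetric] Eg_monom pderiv_monom Eg_0)
  next
    case (Suc j) then show ?thesis
      using gmom_rec[OF assms, of j]
      by (simp add: monom_Suc[symmetric] Eg_monom pderiv_monom)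
  qed
  have "Eg \<sigma> (pCons 0 p) = Eg \<sigma> (pCons 0 (\<Sum>i\<le>degree p. monom (coeff p i) i))"
    by (simp add: poly_as_sum_of_monoms)
  also have "\<dots> = (\<Sum>i\<le>degree p. \<sigma>\<^sup>2 * Eg \<sigma> (pderiv (monom (coeff p i) i)))"
    by (simp add: pCons0_sum Eg_sum[OF assms] mono)
  also have "\<dots> = \<sigma>\<^sup>2 * Eg \<sigma> (pderiv (\<Sum>i\<le>degree p. monom (coeff p i) i))"
    by (simp add: pderiv_sum' Eg_sum[OF assms] sum_distrib_left)
  finally show ?thesis by (simp add: poly_as_sum_of_monoms)
qed

definition hp :: "real \<Rightarrow> nat \<Rightarrow> real poly" where
  "hp a m = (\<Sum>l = 0..m div 2. monom (fact m / (fact l * fact (m - 2 * l)) * a ^ l) (m - 2 * l))"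

definition cf :: "real \<Rightarrow> nat \<Rightarrow> nat \<Rightarrow> real" where
  "cf a m n = (if n \<le> m \<and> even (m - n) then fact m / (fact ((m - n) div 2) * fact n) * a ^ ((m - n) div 2) else 0)"

lemma coeff_hp: "coeff (hp a m) n = cf a m n"
proof -
  have "coeff (hp a m) n = (\<Sum>l = 0..m div 2. if l = (m - n) div 2 \<and> n \<le> m \<and> even (m - n)
          then fact m / (fact l * fact (m - 2 * l)) * a ^ l else 0)"
    unfolding hp_def coeff_sum coeff_monom
  proof (rule sum.cong[OF refl])
    fix l assume l: "l \<in> {0..m div 2}"
    have l': "l \<le> m div 2" using l by simp
    have "(m - 2 * l = n) = (l = (m - n) div 2 \<and> n \<le> m \<and> even (m - n))"
    proof
      have lm: "2 * l \<le> m" using l' by linarith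
      assume h: "m - 2 * l = n"
      then have "m - n = 2 * l" using lm by linarith
      then show "l = (m - n) div 2 \<and> n \<le> m \<and> even (m - n)" using h by simp
    next
      assume h: "l = (m - n) div 2 \<and> n \<le> m \<and> even (m - n)"
      then have e: "even (m - n)" by blast
      have "2 * ((m - n) div 2) = m - n" using e by (rule even_two_times_div_two)
      then have "2 * l = m - n" using h by blast
      then show "m - 2 * l = n" using h by linarith
    qed
    then show "(if m - 2 * l = n then fact m / (fact l * fact (m - 2 * l)) * a ^ l else 0) =
          (if l = (m - n) div 2 \<and> n \<le> m \<and> even (m - n)
           then fact m / (fact l * fact (m - 2 * l)) * a ^ l else 0)"
      by simp
  qed
  also have "\<dots> = cf a m n"
  proof (cases "n \<le> m \<and> even (m - n)")
    case True
    then have "(m - n) div 2 \<in> {0..m div 2}" by (auto intro: div_le_mono)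
    moreover have "m - 2 * ((m - n) div 2) = n" using True by (auto elim!: evenE)
    ultimately show ?thesis using True unfolding cf_def
      by (simp add: sum.delta' del: One_nat_def)
  next
    case False
    then have "cf a m n = 0" unfolding cf_def by (rule if_not_P)
    moreover have "(\<Sum>l = 0..m div 2. if l = (m - n) div 2 \<and> n \<le> m \<and> even (m - n)
          then fact m / (fact l * fact (m - 2 * l)) * a ^ l else 0) = 0"
      using False by (intro sum.neutral ballI if_not_P) blast
    ultimately show ?thesis by simp
  qed
  finally show ?thesis .
qed

lemma gen1: fixes A B F a x y :: real assumes "A > 0" "B > 0" "x \<ge> 0" "y \<ge> 0"
  shows "((y + 2*x + 3) * F) / (((x+1)*A) * ((y+1)*B)) * (a * P) =
     F / (((x+1)*A) * B) * (a * P) + 2 * a * (y + 2) * (F / (A * ((y+2) * ((y+1) * B))) * P)"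
  using assms by (simp add: divide_simps; (simp add: algebra_simps)?)

lemma gen0: fixes A F a x :: real assumes "A > 0" "x \<ge> 0"
  shows "((2*x + 2) * F) / ((x+1)*A * 1) * (a * P) = 2 * a * 1 * (F / (A * 1) * P)"
  using assms by (simp add: divide_simps; (simp add: algebra_simps)?)

lemma key1: "fact (n' + 2 * l' + 3) / (fact (Suc l') * fact (Suc n')) * a ^ Suc l' =
   fact (n' + 2 * l' + 2) / (fact (Suc l') * fact n') * a ^ Suc l' +
   2 * a * real (Suc (Suc n')) * (fact (n' + 2 * l' + 2) / (fact l' * fact (Suc (Suc n'))) * a ^ l')"
proof -
  have e1: "fact (n' + 2 * l' + 3) = (real n' + 2 * real l' + 3) * (fact (n' + 2 * l' + 2)::real)"
    by (simp add: numeral_3_eq_3 fact_Suc)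
  have e2: "fact (Suc l') = (real l' + 1) * (fact l' :: real)" "fact (Suc n') = (real n' + 1) * (fact n' :: real)"
     "fact (Suc (Suc n')) = (real n' + 2) * ((real n' + 1) * (fact n' :: real))"
    by (simp_all add: fact_Suc algebra_simps)
  have e3: "real (Suc (Suc n')) = real n' + 2" by simp
  show ?thesis unfolding e1 e2 e3 power_Suc
    by (rule gen1) auto
qed

lemma key0: "fact (2 * l' + 2) / (fact (Suc l') * fact 0) * a ^ Suc l' =
   2 * a * real (Suc 0) * (fact (2 * l' + 1) / (fact l' * fact (Suc 0)) * a ^ l')"
proof -
  have e1: "fact (2 * l' + 2) = (2 * real l' + 2) * (fact (2 * l' + 1)::real)"
    by (simp add: fact_Suc)
  have e2: "fact (Suc l') = (real l' + 1) * (fact l' :: real)"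
    by (simp_all add: fact_Suc algebra_simps)
  show ?thesis unfolding e1 e2 power_Suc
    using gen0[of "fact l'" "real l'" "fact (2 * l' + 1)" a "a ^ l'"] by simp
qed

lemma cf_rec: "cf a (Suc m) n = (if n = 0 then 0 else cf a m (n - 1)) + 2 * a * real (Suc n) * cf a m (Suc n)"
proof (cases "n \<le> Suc m \<and> even (Suc m - n)")
  case False
  then show ?thesis unfolding cf_def
    by (cases n) (auto simp: le_Suc_eq)
next
  case True
  then have "even (Suc m - n)" by (rule conjunct2)
  then obtain l0 where "Suc m - n = 2 * l0" by (erule evenE)
  then have ml: "Suc m = n + 2 * l0" using True by linarith
  show ?thesis
  proof (cases n)
    case 0
    then obtain l' where l: "l0 = Suc l'" using ml by (cases l0) auto
    have m: "m = 2 * l' + 1" using ml 0 l by simp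
    have a: "Suc (2 * l' + 1) = 2 * l' + 2" by simp
    show ?thesis unfolding cf_def using 0 m l key0[of l' a] by (simp add: a)
  next
    case (Suc n')
    show ?thesis
    proof (cases l0)
      case 0
      then have m: "m = n'" using ml Suc by simp
      show ?thesis unfolding cf_def using Suc m 0 by simp
    next
      case (Suc l')
      have m: "m = n' + 2 * l' + 2" using ml \<open>n = Suc n'\<close> Suc by simp
      have a: "(m - n') div 2 = Suc l'" using m by simp
      have b: "(Suc m - Suc n') div 2 = Suc l'" using m by simp
      have c: "(m - Suc (Suc n')) div 2 = l'" using m by simp
      have d: "Suc m = n' + 2 * l' + 3" using m by simp
      have c1: "(Suc n' \<le> Suc m \<and> even (Suc m - Suc n')) = True" using m by simp
      have c2: "(n' \<le> m \<and> even (m - n')) = True" using m by simp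
      have c3: "(Suc (Suc n') \<le> m \<and> even (m - Suc (Suc n'))) = True" using m by simp
      have e: "Suc n' - 1 = n'" by simp
      have f: "(Suc n' = 0) = False" by simp
      show ?thesis unfolding cf_def \<open>n = Suc n'\<close> e unfolding c1 c2 c3 if_True if_False f a b c
        unfolding d unfolding m by (rule key1)
    qed
  qed
qed

lemma hp_rec: "hp a (Suc m) = pCons 0 (hp a m) + smult (2 * a) (pderiv (hp a m))"
  by (rule poly_eqI) (simp add: coeff_hp coeff_pCons' coeff_pderiv cf_rec del: of_nat_Suc)

lemma hp_0: "hp a 0 = 1"
  unfolding hp_def by simp

lemma coeff_hp_top: "coeff (hp a m) m = 1"
  by (simp add: coeff_hp cf_def)

lemma degree_hp: "degree (hp a m) = m"
proof (rule antisym)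
  show "degree (hp a m) \<le> m" by (rule degree_le) (simp add: coeff_hp cf_def)
  show "m \<le> degree (hp a m)" by (rule le_degree) (simp add: coeff_hp_top)
qed

lemma Eg_hp:
  assumes s: "0 < \<sigma>" and a: "a = - \<sigma>\<^sup>2 / 2"
  shows "degree g \<le> m \<Longrightarrow> Eg \<sigma> (hp a m * g) = (\<sigma>\<^sup>2) ^ m * fact m * coeff g m"
proof (induction m arbitrary: g)
  case 0
  then have "[: coeff g 0 :] = g" by (intro degree_0_id) simp
  then have "Eg \<sigma> (hp a 0 * g) = Eg \<sigma> [: coeff g 0 :]" by (simp add: hp_0)
  then show ?case using Eg_const[OF s] by simp
next
  case (Suc m)
  let ?h = "hp a m"
  have "hp a (Suc m) * g = pCons 0 (?h * g) + smult (2 * a) (pderiv ?h * g)"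
    by (simp add: hp_rec algebra_simps)
  then have "Eg \<sigma> (hp a (Suc m) * g) = \<sigma>\<^sup>2 * Eg \<sigma> (pderiv (?h * g)) + 2 * a * Eg \<sigma> (pderiv ?h * g)"
    by (simp add: Eg_add[OF s] Eg_smult Eg_stein[OF s])
  also have "\<dots> = \<sigma>\<^sup>2 * Eg \<sigma> (?h * pderiv g)"
    by (simp add: pderiv_mult Eg_add[OF s] a algebra_simps)
  also have "\<dots> = \<sigma>\<^sup>2 * ((\<sigma>\<^sup>2) ^ m * fact m * coeff (pderiv g) m)"
    using Suc.prems by (subst Suc.IH) (auto simp: degree_pderiv)
  also have "\<dots> = (\<sigma>\<^sup>2) ^ Suc m * fact (Suc m) * coeff g (Suc m)"
    by (simp add: coeff_pderiv fact_Suc algebra_simps del: of_nat_Suc)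
  finally show ?case .
qed

lemma Eg_hp_hp:
  assumes s: "0 < \<sigma>" and a: "a = - \<sigma>\<^sup>2 / 2"
  shows "Eg \<sigma> (hp a j * hp a m) = (if j = m then (\<sigma>\<^sup>2) ^ m * fact m else 0)"
proof (cases "j \<le> m")
  case True
  then have "Eg \<sigma> (hp a j * hp a m) = Eg \<sigma> (hp a m * hp a j)" by (simp add: ac_simps)
  also have "\<dots> = (\<sigma>\<^sup>2) ^ m * fact m * coeff (hp a j) m"
    using True by (intro Eg_hp[OF s a]) (simp add: degree_hp)
  also have "\<dots> = (if j = m then (\<sigma>\<^sup>2) ^ m * fact m else 0)"
    using True by (auto simp: coeff_hp_top coeff_eq_0 degree_hp)
  finally show ?thesis .
next
  case False
  then have "Eg \<sigma> (hp a j * hp a m) = (\<sigma>\<^sup>2) ^ j * fact j * coeff (hp a m) j"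
    by (intro Eg_hp[OF s a]) (simp add: degree_hp)
  also have "\<dots> = 0" using False by (auto simp: coeff_eq_0 degree_hp)
  finally show ?thesis using False by simp
qed

lemma hp_span: "degree g \<le> n \<Longrightarrow> \<exists>c. g = (\<Sum>j\<le>n. smult (c j) (hp a j))"
proof (induction n arbitrary: g)
  case 0
  then have "[: coeff g 0 :] = g" by (intro degree_0_id) simp
  then have "g = smult (coeff g 0) (hp a 0)" by (simp add: hp_0)
  then show ?case by auto
next
  case (Suc n)
  define g' where "g' = g - smult (coeff g (Suc n)) (hp a (Suc n))"
  have "degree g' \<le> n"
  proof (rule degree_le, intro allI impI)
    fix i assume "n < i"
    show "coeff g' i = 0"
    proof (cases "i = Suc n")
      case True then show ?thesis by (simp add: g'_def coeff_hp_top)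
    next
      case False
      then have "i > Suc n" using \<open>n < i\<close> by simp
      then show ?thesis using Suc.prems
        by (simp add: g'_def coeff_eq_0 degree_hp)
    qed
  qed
  then obtain c where c: "g' = (\<Sum>j\<le>n. smult (c j) (hp a j))" using Suc.IH by blast
  define c' where "c' = c(Suc n := coeff g (Suc n))"
  have "g = g' + smult (coeff g (Suc n)) (hp a (Suc n))" by (simp add: g'_def)
  also have "\<dots> = (\<Sum>j\<le>Suc n. smult (c' j) (hp a j))"
    unfolding c c'_def by (simp add: atMost_Suc)
  finally show ?case by blast
qed

lemma proj_poly:
  assumes s: "0 < \<sigma>" and a: "a = - \<sigma>\<^sup>2 / 2" and dg: "degree g \<le> n"
  shows "(\<Sum>m\<le>n. (Eg \<sigma> (g * hp a m) / Eg \<sigma> (hp a m * hp a m)) * poly (hp a m) x) = poly g x"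
proof -
  obtain c where c: "g = (\<Sum>j\<le>n. smult (c j) (hp a j))" using hp_span[OF dg] by blast
  have nz: "(\<sigma>\<^sup>2) ^ m * fact m \<noteq> 0" for m using s by simp
  have "Eg \<sigma> (g * hp a m) = c m * ((\<sigma>\<^sup>2) ^ m * fact m)" if m: "m \<le> n" for m
  proof -
    have "Eg \<sigma> (g * hp a m) = (\<Sum>j\<le>n. c j * Eg \<sigma> (hp a j * hp a m))"
      unfolding c by (simp add: sum_distrib_right Eg_sum[OF s] Eg_smult)
    also have "\<dots> = (\<Sum>j\<le>n. if j = m then c m * ((\<sigma>\<^sup>2) ^ m * fact m) else 0)"
      by (rule sum.cong) (auto simp: Eg_hp_hp[OF s a])
    also have "\<dots> = c m * ((\<sigma>\<^sup>2) ^ m * fact m)" using m by (simp add: sum.delta)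
    finally show ?thesis .
  qed
  moreover have "Eg \<sigma> (hp a m * hp a m) = (\<sigma>\<^sup>2) ^ m * fact m" for m
    using Eg_hp_hp[OF s a, of m m] by simp
  ultimately have "(\<Sum>m\<le>n. (Eg \<sigma> (g * hp a m) / Eg \<sigma> (hp a m * hp a m)) * poly (hp a m) x)
     = (\<Sum>m\<le>n. c m * poly (hp a m) x)"
    using nz by (intro sum.cong) auto
  also have "\<dots> = poly g x" unfolding c by (simp add: poly_sum)
  finally show ?thesis .
qed

definition sg :: "nat \<Rightarrow> real \<Rightarrow> real" where "sg k s = sqrt 2 / Ifun k s"
definition ha :: "nat \<Rightarrow> real \<Rightarrow> real" where "ha k s = - 1 / (Ifun k s)\<^sup>2"

lemma Ifun_pos: "0 < Ifun k s" by (simp add: Ifun_def)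

lemma sg_pos: "0 < sg k s" by (simp add: sg_def Ifun_pos)

lemma ha_sg: "ha k s = - (sg k s)\<^sup>2 / 2"
  by (simp add: ha_def sg_def power_divide)

lemma rho_nd: "rho k s y = normal_density 0 (sg k s) y"
proof -
  have I: "Ifun k s > 0" by (rule Ifun_pos)
  have "sqrt (2 * pi * (sqrt 2 / Ifun k s)\<^sup>2) = sqrt (4 * pi) / Ifun k s"
    using I by (simp add: power_divide real_sqrt_divide real_sqrt_mult)
  moreover have "- y\<^sup>2 / (2 * (sqrt 2 / Ifun k s)\<^sup>2) = - (Ifun k s)\<^sup>2 * y\<^sup>2 / 4"
    using I by (simp add: power_divide field_simps)
  ultimately show ?thesis unfolding rho_def normal_density_def sg_def
    using I by (simp add: field_simps)
qed

lemma Hpoly_hp: "Hpoly k m s y = poly (hp (ha k s) m) y"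
  unfolding Hpoly_def hp_def ha_def by (simp add: poly_sum poly_monom)

lemma inner_rho_poly: "inner_rho k s (poly g) (poly h) = Eg (sg k s) (g * h)"
  unfolding inner_rho_def Eg_def rho_nd by simp

lemma Pm_poly: "Pm k m s (poly g) = Eg (sg k s) (g * hp (ha k s) m) / Eg (sg k s) (hp (ha k s) m * hp (ha k s) m)"
proof -
  have "Hpoly k m s = poly (hp (ha k s) m)" by (simp add: fun_eq_iff Hpoly_hp)
  then show ?thesis unfolding Pm_def by (simp add: inner_rho_poly)
qed

lemma Pminus_poly: assumes "degree g \<le> Mfloor p k" shows "Pminus p k s (poly g) y = 0"
  unfolding Pminus_def
  using proj_poly[OF sg_pos ha_sg assms, where x=y] by (simp add: Pm_poly Hpoly_hp atLeast0AtMost)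

lemma Pm_add:
  assumes "integrable lborel (\<lambda>y. f y * Hpoly k m s y * rho k s y)"
      and "integrable lborel (\<lambda>y. g y * Hpoly k m s y * rho k s y)"
  shows "Pm k m s (\<lambda>y. f y + g y) = Pm k m s f + Pm k m s g"
  unfolding Pm_def inner_rho_def using assms by (simp add: distrib_right add_divide_distrib)

lemma Pminus_add:
  assumes "\<And>m. integrable lborel (\<lambda>y. f y * Hpoly k m s y * rho k s y)"
      and "\<And>m. integrable lborel (\<lambda>y. g y * Hpoly k m s y * rho k s y)"
  shows "Pminus p k s (\<lambda>y. f y + g y) x = Pminus p k s f x + Pminus p k s g x"
  unfolding Pminus_def using Pm_add[OF assms] by (simp add: distrib_right sum.distrib)

lemma L1: fixes e x a b :: real assumes "0 < e" "0 \<le> x" "0 \<le> a" "0 \<le> b"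
  shows "e powr a * x powr b \<le> e powr (a + b) + x powr (a + b)"
proof (cases "x \<le> e")
  case True
  have "x powr b \<le> e powr b" using True assms by (intro powr_mono2) auto
  then have "e powr a * x powr b \<le> e powr a * e powr b" by (intro mult_left_mono) auto
  also have "\<dots> = e powr (a + b)" by (simp add: powr_add)
  moreover have "0 \<le> x powr (a + b)" by simp
  ultimately show ?thesis by linarith
next
  case False
  have "e powr a \<le> x powr a" using False assms by (intro powr_mono2) auto
  then have "e powr a * x powr b \<le> x powr a * x powr b" by (intro mult_right_mono) auto
  also have "\<dots> = x powr (a + b)" by (simp add: powr_add)
  finally show ?thesis using powr_ge_zero[of e "a+b"] by linarith
qed

lemma L1n: fixes e x a :: real assumes "0 < e" "0 \<le> x" "0 \<le> a"
  shows "e powr a * x ^ n \<le> e powr (a + n) + x powr (a + n)"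
proof (cases "x = 0")
  case True
  then show ?thesis using assms by (cases n) auto
next
  case False
  then have "x ^ n = x powr n" using assms by (simp add: powr_realpow)
  then show ?thesis using L1[OF assms, of n] by simp
qed

lemma L2: fixes e x a b c :: real assumes "0 < e" "0 \<le> x" "0 \<le> b" "b \<le> c"
  shows "e powr a * x powr b \<le> e powr (a + b) + e powr (a + b - c) * x powr c"
proof (cases "x \<le> e")
  case True
  have "x powr b \<le> e powr b" using True assms by (intro powr_mono2) auto
  then have "e powr a * x powr b \<le> e powr a * e powr b" by (intro mult_left_mono) auto
  also have "\<dots> = e powr (a + b)" by (simp add: powr_add)
  moreover have "0 \<le> e powr (a + b - c) * x powr c" by simp
  ultimately show ?thesis by linarith
next
  case False
  then have xp: "0 < x" using assms by simp
  have "x powr (b - c) \<le> e powr (b - c)" using False assms by (intro powr_mono2') auto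
  have "x powr b = x powr c * x powr (b - c)" by (simp add: powr_add[symmetric])
  also have "\<dots> \<le> x powr c * e powr (b - c)"
    using \<open>x powr (b - c) \<le> e powr (b - c)\<close> by (intro mult_left_mono) auto
  finally have "e powr a * x powr b \<le> e powr a * (x powr c * e powr (b - c))"
    by (intro mult_left_mono) auto
  also have "\<dots> = e powr (a + b - c) * x powr c"
    by (simp add: powr_add[symmetric] algebra_simps)
  finally show ?thesis using powr_ge_zero[of e "a+b"] by linarith
qed

definition Ch :: "nat \<Rightarrow> real" where
  "Ch m = (\<Sum>l = 0..m div 2. fact m / (fact l * fact (m - 2 * l)))"

lemma Ch_nonneg: "0 \<le> Ch m" unfolding Ch_def by (intro sum_nonneg) auto

lemma hp_bound:
  assumes e: "0 < e" and a: "a = - (e\<^sup>2)"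
  shows "\<bar>poly (hp a m) y\<bar> \<le> Ch m * (e powr m + \<bar>y\<bar> powr m)"
proof -
  have "\<bar>poly (hp a m) y\<bar> = \<bar>\<Sum>l = 0..m div 2. fact m / (fact l * fact (m - 2 * l)) * a ^ l * y ^ (m - 2 * l)\<bar>"
    unfolding hp_def by (simp add: poly_sum poly_monom)
  also have "\<dots> \<le> (\<Sum>l = 0..m div 2. \<bar>fact m / (fact l * fact (m - 2 * l)) * a ^ l * y ^ (m - 2 * l)\<bar>)"
    by (rule sum_abs)
  also have "\<dots> \<le> (\<Sum>l = 0..m div 2. fact m / (fact l * fact (m - 2 * l)) * (e powr m + \<bar>y\<bar> powr m))"
  proof (rule sum_mono)
    fix l assume l: "l \<in> {0..m div 2}"
    then have lm: "2 * l \<le> m" by auto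
    have "\<bar>a ^ l * y ^ (m - 2 * l)\<bar> = e powr (real (2 * l)) * \<bar>y\<bar> ^ (m - 2 * l)"
    proof -
      have p: "e powr (real (2 * l)) = (e\<^sup>2) ^ l" using e by (subst powr_realpow) (simp_all add: power_mult)
      show ?thesis unfolding p by (simp add: a abs_mult power_abs)
    qed
    also have "\<dots> \<le> e powr (real (2 * l) + real (m - 2 * l)) + \<bar>y\<bar> powr (real (2 * l) + real (m - 2 * l))"
      by (rule L1n) (use e in auto)
    also have "real (2 * l) + real (m - 2 * l) = real m" using lm by simp
    finally have "\<bar>a ^ l * y ^ (m - 2 * l)\<bar> \<le> e powr m + \<bar>y\<bar> powr m" .
    then show "\<bar>fact m / (fact l * fact (m - 2 * l)) * a ^ l * y ^ (m - 2 * l)\<bar>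
        \<le> fact m / (fact l * fact (m - 2 * l)) * (e powr m + \<bar>y\<bar> powr m)"
    proof -
      have c0: "0 \<le> fact m / (fact l * fact (m - 2 * l) :: real)" by simp
      have eq: "\<bar>fact m / (fact l * fact (m - 2 * l)) * a ^ l * y ^ (m - 2 * l)\<bar>
          = fact m / (fact l * fact (m - 2 * l)) * \<bar>a ^ l * y ^ (m - 2 * l)\<bar>"
        using c0 by (simp only: abs_mult mult.assoc abs_of_nonneg)
      show ?thesis unfolding eq using mult_left_mono[OF \<open>\<bar>a ^ l * y ^ (m - 2 * l)\<bar> \<le> e powr m + \<bar>y\<bar> powr m\<close> c0] .
    qed
  qed
  also have "\<dots> = Ch m * (e powr m + \<bar>y\<bar> powr m)"
    unfolding Ch_def by (simp add: sum_distrib_right)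
  finally show ?thesis .
qed

definition wt :: "real \<Rightarrow> real \<Rightarrow> real \<Rightarrow> real" where
  "wt e M y = e powr M + \<bar>y\<bar> powr M"

lemma wt_pos: "0 < e \<Longrightarrow> 0 < wt e M y"
  unfolding wt_def by (smt (verit) powr_gt_zero powr_ge_zero)

lemma poly_meas: "(\<lambda>y. poly (p :: real poly) y) \<in> borel_measurable lborel"
  unfolding measurable_lborel2 by (rule borel_measurable_continuous_onI, rule continuous_on_poly[OF continuous_on_id])

lemma prod_bound:
  fixes e M y :: real assumes e: "0 < e" and M: "0 \<le> M" and K: "M + real m \<le> 2 * real K"
  shows "wt e M y * (e powr m + \<bar>y\<bar> powr m) \<le> 4 * (e powr (M + m) + e powr (M + m - 2 * K) * y ^ (2 * K))"
proof -
  have yK: "\<bar>y\<bar> powr (2 * real K) \<le> y ^ (2 * K)"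
  proof (cases "y = 0")
    case True then show ?thesis by simp
  next
    case False
    then have "\<bar>y\<bar> powr (real (2 * K)) = \<bar>y\<bar> ^ (2 * K)" by (intro powr_realpow) simp
    then show ?thesis by (simp add: power_even_abs)
  qed
  have t0: "0 \<le> e powr (M + m - 2 * K)" by simp
  have t1: "e powr M * e powr m = e powr (M + m)" by (simp add: powr_add)
  have t2: "e powr M * \<bar>y\<bar> powr m \<le> e powr (M + m) + e powr (M + m - 2 * K) * \<bar>y\<bar> powr (2 * real K)"
    using L2[OF e abs_ge_zero, of m "2 * real K" M] K M by simp
  have t3: "\<bar>y\<bar> powr M * e powr m \<le> e powr (M + m) + e powr (M + m - 2 * K) * \<bar>y\<bar> powr (2 * real K)"
    using L2[OF e abs_ge_zero, of M "2 * real K" m] K M by (simp add: ac_simps)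
  have t4: "\<bar>y\<bar> powr M * \<bar>y\<bar> powr m \<le> e powr (M + m) + e powr (M + m - 2 * K) * \<bar>y\<bar> powr (2 * real K)"
    using L2[OF e abs_ge_zero, of "M + m" "2 * real K" 0] K M e by (simp add: powr_add)
  have "wt e M y * (e powr m + \<bar>y\<bar> powr m) =
     e powr M * e powr m + e powr M * \<bar>y\<bar> powr m + \<bar>y\<bar> powr M * e powr m + \<bar>y\<bar> powr M * \<bar>y\<bar> powr m"
    unfolding wt_def by (simp add: algebra_simps)
  also have "\<dots> \<le> 4 * (e powr (M + m) + e powr (M + m - 2 * K) * \<bar>y\<bar> powr (2 * real K))"
    using t1 t2 t3 t4 t0 by (smt (verit) mult_nonneg_nonneg powr_ge_zero)
  also have "\<dots> \<le> 4 * (e powr (M + m) + e powr (M + m - 2 * K) * y ^ (2 * K))"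
    using yK t0 by (intro mult_left_mono add_left_mono) auto
  finally show ?thesis .
qed

definition KP :: "nat \<Rightarrow> nat \<Rightarrow> real" where
  "KP m K = 2 * Ch m * (4 * Ch m * (1 + fact (2 * K) / fact K)) / (2 ^ m * fact m)"

lemma ha_e: "ha k s = - ((1 / Ifun k s)\<^sup>2)"
  by (simp add: ha_def power_divide)

lemma sg2: "(sg k s)\<^sup>2 = 2 * (1 / Ifun k s)\<^sup>2"
  by (simp add: sg_def power_divide)

lemma Pm_bound:
  fixes g :: "real \<Rightarrow> real"
  assumes M: "0 \<le> M" and mM: "real m \<le> M" and K: "M + real m \<le> 2 * real K"
    and gm: "g \<in> borel_measurable lborel" and gb: "\<And>y. \<bar>g y\<bar> \<le> A * wt (1 / Ifun k s) M y"
  shows "integrable lborel (\<lambda>y. g y * Hpoly k m s y * rho k s y)"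
    and "\<bar>Pm k m s g * Hpoly k m s y\<bar> \<le> KP m K * A * wt (1 / Ifun k s) M y"
proof -
  define e where "e = 1 / Ifun k s"
  define \<sigma> where "\<sigma> = sg k s"
  have e: "0 < e" unfolding e_def using Ifun_pos by simp
  have s: "0 < \<sigma>" unfolding \<sigma>_def by (rule sg_pos)
  have A: "0 \<le> A" using gb[of 0] wt_pos[OF e, of M 0] unfolding e_def
    by (smt (verit) zero_le_mult_iff)
  have Hb: "\<bar>Hpoly k m s y\<bar> \<le> Ch m * (e powr m + \<bar>y\<bar> powr m)" for y
    unfolding Hpoly_hp e_def by (rule hp_bound) (auto simp: ha_e Ifun_pos)
  define bf where "bf y = A * Ch m * 4 * (e powr (M + m) * normal_density 0 \<sigma> y
      + e powr (M + m - 2 * K) * (normal_density 0 \<sigma> y * y ^ (2 * K)))" for y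
  have bfi: "integrable lborel bf"
    unfolding bf_def using gmom_integrable[OF s, of "2 * K"] integrable_normal_density[OF s]
    by (intro integrable_mult_right Bochner_Integration.integrable_add) auto
  have bfint: "integral\<^sup>L lborel bf = A * Ch m * 4 * (e powr (M + m) + e powr (M + m - 2 * K) * gmom \<sigma> (2 * K))"
    unfolding bf_def gmom_def using gmom_integrable[OF s, of "2 * K"] integrable_normal_density[OF s] s by simp
  have gm2: "gmom \<sigma> (2 * K) = fact (2 * K) / fact K * e ^ (2 * K)"
  proof -
    have "gmom \<sigma> (2 * K) = fact (2 * K) / ((2 / \<sigma>\<^sup>2)^K * fact K)" by (rule gmom_even[OF s])
    also have "2 / \<sigma>\<^sup>2 = 1 / e ^ 2" unfolding \<sigma>_def sg2 e_def by simp
    also have "fact (2 * K) / ((1 / e ^ 2) ^ K * fact K) = fact (2 * K) / fact K * e ^ (2 * K)"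
      using e by (simp add: power_mult power_divide field_simps flip: power_mult_distrib power_mult)
    finally show ?thesis .
  qed
  have ee: "e powr (M + m - 2 * K) * e ^ (2 * K) = e powr (M + m)"
    using e by (simp add: powr_realpow[symmetric] powr_add[symmetric])
  have bfint2: "integral\<^sup>L lborel bf = A * (4 * Ch m * (1 + fact (2 * K) / fact K)) * e powr (M + m)"
    unfolding bfint gm2 using ee by (simp add: algebra_simps)
  have pt: "\<bar>g y * Hpoly k m s y * rho k s y\<bar> \<le> bf y" for y
  proof -
    have nd: "0 \<le> normal_density 0 \<sigma> y" by simp
    have "\<bar>g y * Hpoly k m s y * rho k s y\<bar> = \<bar>g y\<bar> * \<bar>Hpoly k m s y\<bar> * normal_density 0 \<sigma> y"
      by (simp add: abs_mult rho_nd \<sigma>_def)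
    also have "\<dots> \<le> (A * wt e M y) * (Ch m * (e powr m + \<bar>y\<bar> powr m)) * normal_density 0 \<sigma> y"
      using gb[of y] Hb[of y] nd unfolding e_def
      by (intro mult_right_mono mult_mono) auto
    also have "\<dots> = A * Ch m * (wt e M y * (e powr m + \<bar>y\<bar> powr m)) * normal_density 0 \<sigma> y"
      by (simp add: ac_simps)
    also have "\<dots> \<le> A * Ch m * (4 * (e powr (M + m) + e powr (M + m - 2 * K) * y ^ (2 * K))) * normal_density 0 \<sigma> y"
      using prod_bound[OF e M K, of y] A Ch_nonneg[of m] nd
      by (intro mult_right_mono mult_left_mono) auto
    also have "\<dots> = bf y" unfolding bf_def by (simp add: algebra_simps)
    finally show ?thesis .
  qed
  have meas: "(\<lambda>y. g y * Hpoly k m s y * rho k s y) \<in> borel_measurable lborel"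
    using gm poly_meas[of "hp (ha k s) m"] unfolding Hpoly_hp rho_nd by measurable
  show int: "integrable lborel (\<lambda>y. g y * Hpoly k m s y * rho k s y)"
    by (rule Bochner_Integration.integrable_bound[OF bfi meas]) (use pt in \<open>auto intro!: AE_I2 order.trans[OF _ abs_ge_self]\<close>)
  have num: "\<bar>inner_rho k s g (Hpoly k m s)\<bar> \<le> A * (4 * Ch m * (1 + fact (2 * K) / fact K)) * e powr (M + m)"
    unfolding inner_rho_def bfint2[symmetric]
    by (rule integral_abs_bound_integral[OF int bfi]) (rule pt)
  have HH: "Hpoly k m s = poly (hp (ha k s) m)" by (simp add: fun_eq_iff Hpoly_hp)
  have den: "inner_rho k s (Hpoly k m s) (Hpoly k m s) = 2 ^ m * fact m * e powr (2 * m)"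
  proof -
    have "inner_rho k s (Hpoly k m s) (Hpoly k m s) = (\<sigma>\<^sup>2) ^ m * fact m"
      unfolding HH inner_rho_poly using Eg_hp_hp[OF sg_pos[of k s] ha_sg[of k s], of m m] by (simp add: \<sigma>_def)
    also have "\<dots> = 2 ^ m * fact m * e powr (2 * m)"
    proof -
      have p: "e powr (real (2 * m)) = e ^ (2 * m)" using e by (rule powr_realpow)
      have "(2 * e\<^sup>2) ^ m = 2 ^ m * e ^ (2 * m)" by (simp add: power_mult_distrib power_mult)
      then have "(2 * e\<^sup>2) ^ m * fact m = 2 ^ m * fact m * e powr (2 * real m)"
        using p by simp
      then show ?thesis by (simp add: e_def \<sigma>_def sg2)
    qed
    finally show ?thesis .
  qed
  define B where "B = 4 * Ch m * (1 + fact (2 * K) / fact K)"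
  have B: "0 \<le> B" unfolding B_def using Ch_nonneg[of m] by simp
  have Pmb: "\<bar>Pm k m s g\<bar> \<le> A * B / (2 ^ m * fact m) * e powr (M - m)"
  proof -
    have "\<bar>Pm k m s g\<bar> = \<bar>inner_rho k s g (Hpoly k m s)\<bar> / (2 ^ m * fact m * e powr (2 * m))"
      unfolding Pm_def den by (simp add: abs_divide)
    also have "\<dots> \<le> A * B * e powr (M + m) / (2 ^ m * fact m * e powr (2 * m))"
      using num unfolding B_def by (intro divide_right_mono) auto
    also have "\<dots> = A * B / (2 ^ m * fact m) * (e powr (M + m) / e powr (2 * m))"
      by simp
    also have "e powr (M + m) / e powr (2 * m) = e powr (M - m)"
      by (simp add: powr_diff[symmetric])
    finally show ?thesis .
  qed
  define c where "c = A * B * Ch m / (2 ^ m * fact m)"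
  have c: "0 \<le> c" unfolding c_def using A B Ch_nonneg[of m] by simp
  have "\<bar>Pm k m s g * Hpoly k m s y\<bar> \<le> (A * B / (2 ^ m * fact m) * e powr (M - m)) * (Ch m * (e powr m + \<bar>y\<bar> powr m))"
    unfolding abs_mult using Pmb Hb[of y] by (intro mult_mono) auto
  also have "\<dots> = c * (e powr (M - m) * e powr m + e powr (M - m) * \<bar>y\<bar> powr m)"
    unfolding c_def by (simp add: algebra_simps add_divide_distrib)
  also have "e powr (M - m) * e powr m = e powr M" by (simp add: powr_add[symmetric])
  finally have st1: "\<bar>Pm k m s g * Hpoly k m s y\<bar> \<le> c * (e powr M + e powr (M - m) * \<bar>y\<bar> powr m)" .
  have st2: "e powr (M - m) * \<bar>y\<bar> powr m \<le> e powr M + \<bar>y\<bar> powr M"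
    using L1[OF e abs_ge_zero, of "M - m" m] mM by simp
  have "\<bar>Pm k m s g * Hpoly k m s y\<bar> \<le> c * (e powr M + (e powr M + \<bar>y\<bar> powr M))"
    using st1 mult_left_mono[OF add_left_mono[OF st2, of "e powr M"] c] by linarith
  also have "\<dots> = A * B * Ch m / (2 ^ m * fact m) * (e powr M + (e powr M + \<bar>y\<bar> powr M))"
    unfolding c_def ..
  also have "\<dots> \<le> A * B * Ch m / (2 ^ m * fact m) * (2 * wt e M y)"
    using A B Ch_nonneg[of m] unfolding wt_def
    by (intro mult_left_mono) (auto intro!: divide_nonneg_nonneg)
  also have "\<dots> = KP m K * A * wt e M y"
    unfolding KP_def B_def by (simp add: algebra_simps)
  finally show "\<bar>Pm k m s g * Hpoly k m s y\<bar> \<le> KP m K * A * wt (1 / Ifun k s) M y"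
    unfolding e_def .
qed

lemma Pminus_bound:
  fixes g :: "real \<Rightarrow> real"
  assumes M: "0 \<le> Mexp p k" and mM: "\<And>m. m \<le> Mfloor p k \<Longrightarrow> real m \<le> Mexp p k"
    and K: "Mexp p k + real (Mfloor p k) \<le> 2 * real K"
    and gm: "g \<in> borel_measurable lborel" and gb: "\<And>y. \<bar>g y\<bar> \<le> A * wt (1 / Ifun k s) (Mexp p k) y"
  shows "\<bar>Pminus p k s g y\<bar> \<le> (1 + (\<Sum>m\<le>Mfloor p k. KP m K)) * A * wt (1 / Ifun k s) (Mexp p k) y"
proof -
  let ?w = "wt (1 / Ifun k s) (Mexp p k) y"
  have "\<bar>Pminus p k s g y\<bar> \<le> \<bar>g y\<bar> + \<bar>\<Sum>m = 0..Mfloor p k. Pm k m s g * Hpoly k m s y\<bar>"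
    unfolding Pminus_def by (rule abs_triangle_ineq4)
  also have "\<dots> \<le> A * ?w + (\<Sum>m\<le>Mfloor p k. \<bar>Pm k m s g * Hpoly k m s y\<bar>)"
  proof -
    have "\<bar>\<Sum>m = 0..Mfloor p k. Pm k m s g * Hpoly k m s y\<bar> \<le> (\<Sum>m = 0..Mfloor p k. \<bar>Pm k m s g * Hpoly k m s y\<bar>)"
      by (rule sum_abs)
    then show ?thesis using gb[of y] unfolding atLeast0AtMost by linarith
  qed
  also have "(\<Sum>m\<le>Mfloor p k. \<bar>Pm k m s g * Hpoly k m s y\<bar>) \<le> (\<Sum>m\<le>Mfloor p k. KP m K * A * ?w)"
  proof (rule sum_mono)
    fix m assume "m \<in> {..Mfloor p k}"
    then have m: "m \<le> Mfloor p k" by simp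
    show "\<bar>Pm k m s g * Hpoly k m s y\<bar> \<le> KP m K * A * ?w"
      by (rule Pm_bound(2)[OF M mM[OF m] _ gm gb]) (use K m in linarith)
  qed
  finally show ?thesis by (simp add: algebra_simps sum_distrib_right sum_distrib_left)
qed

lemma Pminus_integrable:
  fixes g :: "real \<Rightarrow> real"
  assumes M: "0 \<le> Mexp p k" and mM: "real m \<le> Mexp p k"
    and K: "Mexp p k + real m \<le> 2 * real K"
    and gm: "g \<in> borel_measurable lborel" and gb: "\<And>y. \<bar>g y\<bar> \<le> A * wt (1 / Ifun k s) (Mexp p k) y"
  shows "integrable lborel (\<lambda>y. g y * Hpoly k m s y * rho k s y)"
  by (rule Pm_bound(1)[OF M mM K gm gb])

lemma poly_integrable: "integrable lborel (\<lambda>y. poly g y * Hpoly k m s y * rho k s y)"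
proof -
  have "(\<lambda>y. poly g y * Hpoly k m s y * rho k s y) = (\<lambda>y. poly (g * hp (ha k s) m) y * normal_density 0 (sg k s) y)"
    by (simp add: fun_eq_iff Hpoly_hp rho_nd)
  then show ?thesis using Eg_integrable[OF sg_pos, of "g * hp (ha k s) m" k s] by (simp only:)
qed

lemma geom: fixes u :: real assumes "0 \<le> u"
  shows "u / (1 + u) = (\<Sum>j = 1..J. (-1) ^ (j - 1) * u ^ j) + (-1) ^ J * u ^ (J + 1) / (1 + u)"
proof (induction J)
  case 0 then show ?case by simp
next
  case (Suc J)
  have "(-1) ^ J * u ^ (J + 1) / (1 + u) = (-1) ^ J * u ^ (J + 1) + (-1) ^ Suc J * u ^ (Suc J + 1) / (1 + u)"
    using assms by (simp add: field_simps)
  then show ?case using Suc by simp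
qed

definition Qpoly :: "real \<Rightarrow> nat \<Rightarrow> real \<Rightarrow> nat \<Rightarrow> real poly" where
  "Qpoly p k b J = smult (1 / b) (\<Sum>j = 1..J. smult ((-1) ^ (j - 1) * (b / (p - 1)) ^ j) (monom 1 (2 * k * j)))"

lemma degree_Qpoly: "degree (Qpoly p k b J) \<le> 2 * k * J"
  unfolding Qpoly_def
  by (rule order.trans[OF degree_smult_le], rule degree_sum_le, simp,
      rule order.trans[OF degree_smult_le], rule order.trans[OF degree_monom_le]) auto

lemma Qpoly_eq:
  assumes p: "1 < p" and b: "0 < b"
  shows "y ^ (2 * k) * e_b p k b y = poly (Qpoly p k b J) y
           + (1 / b) * ((-1) ^ J * (b * y ^ (2 * k) / (p - 1)) ^ (J + 1) / (1 + b * y ^ (2 * k) / (p - 1)))"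
proof -
  define u where "u = b * y ^ (2 * k) / (p - 1)"
  have u: "0 \<le> u" unfolding u_def using p b by (simp add: zero_le_even_power)
  have "y ^ (2 * k) * e_b p k b y = (1 / b) * (u / (1 + u))"
  proof -
    define Y where "Y = y ^ (2 * k)"
    have Y: "0 \<le> Y" unfolding Y_def by (simp add: zero_le_even_power)
    have nz: "p - 1 + b * Y \<noteq> 0" "p - 1 \<noteq> 0" "b \<noteq> 0" "1 + b * Y / (p - 1) \<noteq> 0"
    proof -
      have h2: "0 \<le> b * Y / (p - 1)" using p b Y by simp
      have h1: "0 \<le> b * Y" using b Y by simp
      show "p - 1 + b * Y \<noteq> 0" using h1 p by linarith
      show "p - 1 \<noteq> 0" using p by linarith
      show "b \<noteq> 0" using b by linarith
      show "1 + b * Y / (p - 1) \<noteq> 0" using h2 by linarith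
    qed
    have e1: "1 + b * Y / (p - 1) = (p - 1 + b * Y) / (p - 1)" using nz by (simp add: field_simps)
    have e2: "(b * Y / (p - 1)) / ((p - 1 + b * Y) / (p - 1)) = b * Y / (p - 1 + b * Y)"
      using nz by simp
    have "Y / (p - 1 + b * Y) = (1 / b) * ((b * Y / (p - 1)) / (1 + b * Y / (p - 1)))"
      unfolding e1 e2 using nz by simp
    then show ?thesis unfolding e_b_def u_def Y_def by simp
  qed
  also have "\<dots> = (1 / b) * (\<Sum>j = 1..J. (-1) ^ (j - 1) * u ^ j) + (1 / b) * ((-1) ^ J * u ^ (J + 1) / (1 + u))"
    unfolding geom[OF u, of J] by (simp add: algebra_simps)
  also have "(\<Sum>j = 1..J. (-1) ^ (j - 1) * u ^ j) = (\<Sum>j = 1..J. (-1) ^ (j - 1) * (b / (p - 1)) ^ j * y ^ (2 * k * j))"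
    unfolding u_def by (intro sum.cong refl) (simp add: power_mult_distrib power_divide power_mult)
  finally show ?thesis unfolding Qpoly_def u_def
    by (simp add: poly_sum poly_monom)
qed

lemma Rbound:
  fixes p b b0 e y M :: real and k m N J :: nat
  assumes p: "1 < p" and b0: "0 < b0" and bl: "b0 / 2 \<le> b" and bu: "b \<le> 2 * b0"
    and e: "0 < e" "e \<le> 1" and k: "1 \<le> k"
    and J: "2 * k * J + m \<le> N" and NM: "real N < M" and MJ: "M \<le> real (2 * k * (J + 1) + m)"
  shows "\<bar>(1 / b) * ((-1) ^ J * (b * y ^ (2 * k) / (p - 1)) ^ (J + 1) / (1 + b * y ^ (2 * k) / (p - 1)))
            * poly (hp (- (e\<^sup>2)) m) y\<bar>
       \<le> (2 / b0) * Ch m * 2 * ((2 * b0 / (p - 1)) ^ (J + 1) + (2 * b0 / (p - 1)) ^ J) * (e powr M + \<bar>y\<bar> powr M)"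
proof -
  define \<beta> where "\<beta> = b / (p - 1)"
  define \<beta>0 where "\<beta>0 = 2 * b0 / (p - 1)"
  define u where "u = b * y ^ (2 * k) / (p - 1)"
  define H where "H = poly (hp (- (e\<^sup>2)) m) y"
  define w where "w = e powr M + \<bar>y\<bar> powr M"
  have bpos: "0 < b" using b0 bl by linarith
  have \<beta>: "0 \<le> \<beta>" "\<beta> \<le> \<beta>0" unfolding \<beta>_def \<beta>0_def using p bpos bu by (auto intro: divide_right_mono)
  have ib: "1 / b \<le> 2 / b0" using bl b0 bpos by (simp add: field_simps)
  have u: "u = \<beta> * \<bar>y\<bar> ^ (2 * k)" unfolding u_def \<beta>_def by (simp add: power_even_abs)
  have u0: "0 \<le> u" unfolding u using \<beta> by simp
  have Hb: "\<bar>H\<bar> \<le> Ch m * (e powr m + \<bar>y\<bar> powr m)" unfolding H_def by (rule hp_bound[OF e(1)]) simp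
  have w0: "0 \<le> w" unfolding w_def by simp
  have Chn: "0 \<le> Ch m" by (rule Ch_nonneg)
  have \<beta>0n: "0 \<le> \<beta>0" using \<beta> by linarith
  have L: "\<bar>(1 / b) * ((-1) ^ J * u ^ (J + 1) / (1 + u)) * H\<bar> = (1 / b) * (u ^ (J + 1) / (1 + u)) * \<bar>H\<bar>"
    using bpos u0 by (simp add: abs_mult abs_divide power_abs)
  have main: "(u ^ (J + 1) / (1 + u)) * \<bar>H\<bar> \<le> Ch m * 2 * (\<beta>0 ^ (J + 1) + \<beta>0 ^ J) * w"
  proof (cases "\<bar>y\<bar> \<le> 1")
    case True
    define D where "D = 2 * k * (J + 1)"
    have D1: "1 \<le> D" unfolding D_def using k by simp
    have MD: "M \<le> real m + real D" using MJ unfolding D_def by simp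
    have uu: "u ^ (J + 1) / (1 + u) \<le> \<beta>0 ^ (J + 1) * \<bar>y\<bar> ^ D"
    proof -
      have "u ^ (J + 1) / (1 + u) \<le> u ^ (J + 1)" using u0 divide_left_mono[of 1 "1 + u" "u ^ (J + 1)"] by simp
      also have "\<dots> = \<beta> ^ (J + 1) * \<bar>y\<bar> ^ D" unfolding u D_def by (simp only: power_mult_distrib power_mult)
      also have "\<dots> \<le> \<beta>0 ^ (J + 1) * \<bar>y\<bar> ^ D" using \<beta> by (intro mult_right_mono power_mono) auto
      finally show ?thesis .
    qed
    have t1: "e powr m * \<bar>y\<bar> ^ D \<le> w"
    proof -
      have "e powr m * \<bar>y\<bar> ^ D \<le> e powr (real m + real D) + \<bar>y\<bar> powr (real m + real D)" by (rule L1n) (use e in auto)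
      also have "e powr (real m + real D) \<le> e powr M" using e MD by (intro powr_mono') auto
      also have "\<bar>y\<bar> powr (real m + real D) \<le> \<bar>y\<bar> powr M" using True MD by (intro powr_mono') auto
      finally show ?thesis unfolding w_def by simp
    qed
    have t2: "\<bar>y\<bar> ^ D * \<bar>y\<bar> powr m \<le> w"
    proof (cases "y = 0")
      case True then show ?thesis using D1 w0 by simp
    next
      case False
      have "\<bar>y\<bar> ^ D * \<bar>y\<bar> powr m = \<bar>y\<bar> powr (m + D)"
        using False by (simp add: powr_add powr_realpow)
      also have "\<dots> \<le> \<bar>y\<bar> powr M" using True MD by (intro powr_mono') auto
      finally show ?thesis unfolding w_def using powr_ge_zero[of e M] by linarith
    qed
    have "(u ^ (J + 1) / (1 + u)) * \<bar>H\<bar> \<le> (\<beta>0 ^ (J + 1) * \<bar>y\<bar> ^ D) * (Ch m * (e powr m + \<bar>y\<bar> powr m))"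
      using uu Hb u0 \<beta>0n by (intro mult_mono) auto
    also have "\<dots> = \<beta>0 ^ (J + 1) * Ch m * (e powr m * \<bar>y\<bar> ^ D + \<bar>y\<bar> ^ D * \<bar>y\<bar> powr m)"
      by (simp add: algebra_simps)
    also have "\<dots> \<le> \<beta>0 ^ (J + 1) * Ch m * (2 * w)"
      using t1 t2 \<beta>0n Chn by (intro mult_left_mono) auto
    also have "\<dots> \<le> Ch m * 2 * (\<beta>0 ^ (J + 1) + \<beta>0 ^ J) * w"
      using \<beta>0n Chn w0 by (simp add: algebra_simps mult_left_mono)
    finally show ?thesis .
  next
    case False
    define D where "D = 2 * k * J"
    have "real (2 * k * J + m) \<le> real N" using J by (simp only: of_nat_le_iff)
    then have MD: "real D + real m \<le> M" using NM unfolding D_def by simp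
    have uu: "u ^ (J + 1) / (1 + u) \<le> \<beta>0 ^ J * \<bar>y\<bar> ^ D"
    proof -
      have "u ^ (J + 1) / (1 + u) = u ^ J * (u / (1 + u))" by simp
      also have "\<dots> \<le> u ^ J * 1" using u0 by (intro mult_left_mono) auto
      also have "\<dots> = \<beta> ^ J * \<bar>y\<bar> ^ D" unfolding u D_def by (simp only: power_mult_distrib power_mult)
      also have "\<dots> \<le> \<beta>0 ^ J * \<bar>y\<bar> ^ D" using \<beta> by (intro mult_right_mono power_mono) auto
      finally show ?thesis .
    qed
    have y1: "1 \<le> \<bar>y\<bar>" using False by simp
    have em: "e powr m \<le> \<bar>y\<bar> powr m"
    proof -
      have "e powr m \<le> 1" using e by (intro powr_le1) auto
      also have "1 \<le> \<bar>y\<bar> powr m" using y1 by (intro ge_one_powr_ge_zero) auto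
      finally show ?thesis .
    qed
    have t: "\<bar>y\<bar> ^ D * \<bar>y\<bar> powr m \<le> \<bar>y\<bar> powr M"
    proof -
      have "\<bar>y\<bar> ^ D * \<bar>y\<bar> powr m = \<bar>y\<bar> powr (D + m)"
        using y1 by (simp add: powr_add powr_realpow)
      also have "\<dots> \<le> \<bar>y\<bar> powr M" using y1 MD by (intro powr_mono) auto
      finally show ?thesis .
    qed
    have "(u ^ (J + 1) / (1 + u)) * \<bar>H\<bar> \<le> (\<beta>0 ^ J * \<bar>y\<bar> ^ D) * (Ch m * (e powr m + \<bar>y\<bar> powr m))"
      using uu Hb u0 \<beta>0n by (intro mult_mono) auto
    also have "\<dots> \<le> (\<beta>0 ^ J * \<bar>y\<bar> ^ D) * (Ch m * (2 * \<bar>y\<bar> powr m))"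
      using em \<beta>0n Chn by (intro mult_left_mono) auto
    also have "\<dots> = \<beta>0 ^ J * Ch m * 2 * (\<bar>y\<bar> ^ D * \<bar>y\<bar> powr m)" by (simp add: algebra_simps)
    also have "\<dots> \<le> \<beta>0 ^ J * Ch m * 2 * w"
    proof -
      have "\<bar>y\<bar> ^ D * \<bar>y\<bar> powr m \<le> w" using t powr_ge_zero[of e M] unfolding w_def by linarith
      then show ?thesis using \<beta>0n Chn by (intro mult_left_mono) auto
    qed
    also have "\<dots> \<le> Ch m * 2 * (\<beta>0 ^ (J + 1) + \<beta>0 ^ J) * w"
      using \<beta>0n Chn w0 by (simp add: algebra_simps mult_left_mono)
    finally show ?thesis .
  qed
  have "\<bar>(1 / b) * ((-1) ^ J * u ^ (J + 1) / (1 + u)) * H\<bar> \<le> (2 / b0) * (Ch m * 2 * (\<beta>0 ^ (J + 1) + \<beta>0 ^ J) * w)"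
  proof -
    have L': "\<bar>(1 / b) * ((-1) ^ J * u ^ (J + 1) / (1 + u)) * H\<bar> = (1 / b) * ((u ^ (J + 1) / (1 + u)) * \<bar>H\<bar>)"
      unfolding L by (simp only: mult.assoc)
    have nn: "0 \<le> (u ^ (J + 1) / (1 + u)) * \<bar>H\<bar>" using u0 by simp
    show ?thesis unfolding L' by (rule mult_mono[OF ib main]) (use b0 nn in auto)
  qed
  then show ?thesis unfolding u_def H_def w_def \<beta>0_def by (simp only: mult.assoc)
qed

lemma Pminus_add':
  assumes "\<And>m. m \<le> Mfloor p k \<Longrightarrow> integrable lborel (\<lambda>y. f y * Hpoly k m s y * rho k s y)"
      and "\<And>m. m \<le> Mfloor p k \<Longrightarrow> integrable lborel (\<lambda>y. g y * Hpoly k m s y * rho k s y)"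
  shows "Pminus p k s (\<lambda>y. f y + g y) x = Pminus p k s f x + Pminus p k s g x"
proof -
  have "(\<Sum>m = 0..Mfloor p k. Pm k m s (\<lambda>y. f y + g y) * Hpoly k m s x)
      = (\<Sum>m = 0..Mfloor p k. Pm k m s f * Hpoly k m s x + Pm k m s g * Hpoly k m s x)"
    by (rule sum.cong[OF refl]) (simp add: Pm_add[OF assms] distrib_right)
  then show ?thesis unfolding Pminus_def by (simp add: sum.distrib)
qed

lemma params:
  assumes p: "1 < p" and k: "2 \<le> k"
  shows "real (2 * k) < Mexp p k" "real (Mfloor p k) < Mexp p k" "Mexp p k \<le> real (Mfloor p k) + 1"
    "2 * k \<le> Mfloor p k" "0 < Mexp p k"
proof -
  have "p / (p - 1) > 1" using p by simp
  then have "2 * real k * (p / (p - 1)) > 2 * real k * 1" using k by (intro mult_strict_left_mono) auto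
  then show M2k: "real (2 * k) < Mexp p k" unfolding Mexp_def by simp
  then show M0: "0 < Mexp p k" by linarith
  have c1: "of_int \<lceil>Mexp p k\<rceil> - 1 < Mexp p k" "Mexp p k \<le> of_int \<lceil>Mexp p k\<rceil>" using ceiling_correct by auto
  have cpos: "1 \<le> \<lceil>Mexp p k\<rceil>" using M0 by (simp add: less_ceiling_iff[symmetric]) 
  have N: "real (Mfloor p k) = of_int \<lceil>Mexp p k\<rceil> - 1" unfolding Mfloor_def using cpos by simp
  show "real (Mfloor p k) < Mexp p k" using N c1 by simp
  show "Mexp p k \<le> real (Mfloor p k) + 1" using N c1 by simp
  have "int (2 * k) < \<lceil>Mexp p k\<rceil>" using M2k by (simp add: less_ceiling_iff)
  then show "2 * k \<le> Mfloor p k" unfolding Mfloor_def by simp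
qed

lemma Ifun_ge1: assumes "0 \<le> s" "1 \<le> k" shows "1 \<le> Ifun k s"
proof -
  have "1 / real k \<le> 1" using assms by simp
  then have "0 \<le> s / 2 * (1 - 1 / real k)" using assms by (intro mult_nonneg_nonneg) auto
  then show ?thesis unfolding Ifun_def by simp
qed

lemma wt_eq: "wt (1 / Ifun k s) M y = Ifun k s powr (- M) + \<bar>y\<bar> powr M"
  unfolding wt_def by (simp add: powr_divide powr_minus_divide Ifun_pos less_imp_le)

definition JJ :: "real \<Rightarrow> nat \<Rightarrow> nat \<Rightarrow> nat" where
  "JJ p k m = (Mfloor p k - m) div (2 * k)"

definition CRm :: "real \<Rightarrow> nat \<Rightarrow> real \<Rightarrow> nat \<Rightarrow> real" where
  "CRm p k b0 m = (2 / b0) * Ch m * 2 * ((2 * b0 / (p - 1)) ^ (JJ p k m + 1) + (2 * b0 / (p - 1)) ^ JJ p k m)"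

definition A0 :: "real \<Rightarrow> nat \<Rightarrow> real \<Rightarrow> real" where
  "A0 p k b0 = p / (p - 1) * (2 / b0) + (\<Sum>m\<le>Mfloor p k. p / (p - 1) * CRm p k b0 m)"

definition CC :: "real \<Rightarrow> nat \<Rightarrow> real \<Rightarrow> real" where
  "CC p k b0 = (1 + (\<Sum>m\<le>Mfloor p k. KP m (Mfloor p k + 1))) * A0 p k b0"

lemma JJ_props:
  fixes m N d :: nat
  assumes "m \<le> N" "0 < d"
  shows "d * ((N - m) div d) + m \<le> N" "N + 1 \<le> d * ((N - m) div d + 1) + m"
proof -
  have e: "d * ((N - m) div d) + (N - m) mod d = N - m" by (rule mult_div_mod_eq)
  have l: "(N - m) mod d < d" using assms by simp
  show "d * ((N - m) div d) + m \<le> N" using e assms by linarith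
  have "d * ((N - m) div d + 1) = d * ((N - m) div d) + d" by (simp add: algebra_simps)
  then show "N + 1 \<le> d * ((N - m) div d + 1) + m" using e l assms by linarith
qed

lemma eb_bound:
  assumes p: "1 < p" and b: "0 < b"
  shows "\<bar>y ^ (2 * k) * e_b p k b y\<bar> \<le> 1 / b"
proof -
  define Y where "Y = y ^ (2 * k)"
  have Y: "0 \<le> Y" unfolding Y_def by (simp add: zero_le_even_power)
  have D: "0 < p - 1 + b * Y" using p b Y by (simp add: add_pos_nonneg)
  have "Y / (p - 1 + b * Y) \<le> 1 / b"
    using D b Y p by (simp add: divide_simps)
  moreover have "0 \<le> Y / (p - 1 + b * Y)" using D Y by simp
  moreover have "y ^ (2 * k) * e_b p k b y = Y / (p - 1 + b * Y)" unfolding e_b_def Y_def by simp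
  ultimately show ?thesis by (metis abs_of_nonneg)
qed

lemma per_s:
  assumes p: "1 < p" and k: "2 \<le> k" and b0: "0 < b0" and s: "0 \<le> s" and \<delta>: "0 \<le> \<delta>"
    and V: "(q, b) \<in> Vset p k \<delta> b0 s"
  shows "\<bar>Pminus p k s (Mcal p k b q) y\<bar> \<le> CC p k b0 * Ifun k s powr (- \<delta>) * wt (1 / Ifun k s) (Mexp p k) y"
proof -
  define N where "N = Mfloor p k"
  define M where "M = Mexp p k"
  define I where "I = Ifun k s"
  define e where "e = 1 / I"
  define \<eta> where "\<eta> = I powr (- \<delta>)"
  define c where "c = p / (p - 1)"
  note par = params[OF p k]
  have I1: "1 \<le> I" unfolding I_def using s k by (intro Ifun_ge1) auto
  have e: "0 < e" "e \<le> 1" unfolding e_def using I1 by auto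
  have \<eta>0: "0 \<le> \<eta>" unfolding \<eta>_def by simp
  have c0: "0 \<le> c" unfolding c_def using p by simp
  from V have qmeas: "q \<in> borel_measurable lborel"
    and hqm0: "\<And>m. m \<le> N \<Longrightarrow> m \<noteq> 2 * k \<Longrightarrow> \<bar>Pm k m s q\<bar> \<le> \<eta>"
    and hq2k: "\<bar>Pm k (2 * k) s q\<bar> \<le> I powr (- 2 * \<delta>)"
    and hw: "wnorm p k s (Pminus p k s q) \<le> ereal \<eta>"
    and bl: "b0 / 2 \<le> b" and bu: "b \<le> 2 * b0"
    unfolding Vset_def admissible_def N_def \<eta>_def I_def by auto
  have bpos: "0 < b" using b0 bl by linarith
  have hqm: "\<bar>Pm k m s q\<bar> \<le> \<eta>" if m: "m \<le> N" for m
  proof (cases "m = 2 * k")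
    case True
    have "I powr (- 2 * \<delta>) \<le> I powr (- \<delta>)" using I1 \<delta> by (intro powr_mono) auto
    then show ?thesis using hq2k True unfolding \<eta>_def by simp
  next
    case False then show ?thesis using hqm0 m by simp
  qed
  have hqmi: "\<bar>Pminus p k s q y\<bar> \<le> \<eta> * wt e M y" for y
  proof -
    have w: "0 < wt e M y" using e by (intro wt_pos) auto
    have "ereal (\<bar>Pminus p k s q y\<bar> / (Ifun k s powr (- Mexp p k) + \<bar>y\<bar> powr Mexp p k)) \<le> ereal \<eta>"
      using hw unfolding wnorm_def by (simp add: SUP_le_iff)
    then have "\<bar>Pminus p k s q y\<bar> / wt e M y \<le> \<eta>"
      unfolding e_def I_def M_def wt_eq by simp
    then show ?thesis using w by (simp add: divide_le_eq)
  qed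
  define qm where "qm m = Pm k m s q" for m
  define qmi where "qmi = Pminus p k s q"
  have qdec: "q y = qmi y + (\<Sum>m\<le>N. qm m * Hpoly k m s y)" for y
    unfolding qmi_def qm_def Pminus_def N_def by (simp add: atLeast0AtMost)
  define Jm where "Jm m = JJ p k m" for m
  define Qm where "Qm m = Qpoly p k b (Jm m) * hp (ha k s) m" for m
  define R where "R m y = (1 / b) * ((-1) ^ Jm m * (b * y ^ (2 * k) / (p - 1)) ^ (Jm m + 1)
       / (1 + b * y ^ (2 * k) / (p - 1))) * Hpoly k m s y" for m y
  have key: "y ^ (2 * k) * e_b p k b y * Hpoly k m s y = poly (Qm m) y + R m y" for m y
    using Qpoly_eq[OF p bpos, where y=y and k=k and J="Jm m"]
    unfolding Qm_def R_def Hpoly_hp by (simp add: algebra_simps)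
  define G where "G = smult c (monom 1 (2 * k)) + (\<Sum>m\<le>N. smult (c * qm m) (Qm m))"
  define F where "F y = c * (y ^ (2 * k) * e_b p k b y) * qmi y + (\<Sum>m\<le>N. c * qm m * R m y)" for y
  have dec: "Mcal p k b q = (\<lambda>y. poly G y + F y)"
  proof
    fix y
    have "Mcal p k b q y = c * y ^ (2 * k) + c * (y ^ (2 * k) * e_b p k b y) * qmi y
        + (\<Sum>m\<le>N. c * qm m * (y ^ (2 * k) * e_b p k b y * Hpoly k m s y))"
      unfolding Mcal_def c_def[symmetric] qdec
      by (simp add: algebra_simps sum_distrib_left)
    also have "\<dots> = poly G y + F y"
      unfolding key G_def F_def
      by (simp add: poly_sum poly_monom algebra_simps sum.distrib)
    finally show "Mcal p k b q y = poly G y + F y" .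
  qed
  have degG: "degree G \<le> N"
  proof -
    have "degree (smult c (monom 1 (2 * k)) :: real poly) \<le> N"
      using par(4) unfolding N_def by (intro order.trans[OF degree_smult_le] order.trans[OF degree_monom_le]) auto
    moreover have "degree (\<Sum>m\<le>N. smult (c * qm m) (Qm m)) \<le> N"
    proof (rule degree_sum_le)
      fix m assume "m \<in> {..N}"
      then have m: "m \<le> N" by simp
      have "degree (Qm m) \<le> 2 * k * Jm m + m"
        unfolding Qm_def
        using degree_mult_le[of "Qpoly p k b (Jm m)" "hp (ha k s) m"] degree_Qpoly[of p k b "Jm m"]
        by (simp add: degree_hp)
      also have "\<dots> \<le> N" using JJ_props(1)[OF m, of "2 * k"] k unfolding Jm_def JJ_def N_def by simp
      finally show "degree (smult (c * qm m) (Qm m)) \<le> N" using degree_smult_le order.trans by blast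
    qed simp
    ultimately show ?thesis unfolding G_def by (intro degree_add_le) 
  qed
  have Hm[measurable]: "Hpoly k m s \<in> borel_measurable borel" for m
  proof -
    have "Hpoly k m s = (\<lambda>y. poly (hp (ha k s) m) y)" by (simp add: fun_eq_iff Hpoly_hp)
    then show ?thesis using poly_meas[of "hp (ha k s) m"] by simp
  qed
  have qm'[measurable]: "q \<in> borel_measurable borel" using qmeas by simp
  have Fmeas: "F \<in> borel_measurable lborel"
    unfolding F_def R_def qmi_def Pminus_def e_b_def by simp measurable
  have k1: "1 \<le> k" using k by simp
  have Rb: "\<bar>R m y\<bar> \<le> CRm p k b0 m * wt e M y" if m: "m \<le> N" for m y
  proof -
    have J: "2 * k * Jm m + m \<le> N" using JJ_props(1)[OF m, of "2 * k"] k unfolding Jm_def JJ_def N_def by simp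
    have J2: "N + 1 \<le> 2 * k * (Jm m + 1) + m" using JJ_props(2)[OF m, of "2 * k"] k unfolding Jm_def JJ_def N_def by simp
    have NM: "real N < M" using par(2) unfolding N_def M_def .
    have MJ: "M \<le> real (2 * k * (Jm m + 1) + m)"
    proof -
      have "real (N + 1) \<le> real (2 * k * (Jm m + 1) + m)" using J2 by (simp only: of_nat_le_iff)
      then show ?thesis using par(3) unfolding N_def M_def by simp
    qed
    have ha: "ha k s = - (e\<^sup>2)" unfolding e_def I_def by (rule ha_e)
    show ?thesis
      using Rbound[OF p b0 bl bu e(1) e(2) k1 J NM MJ, where y=y]
      unfolding R_def Hpoly_hp ha CRm_def Jm_def wt_def by (simp only: mult.assoc)
  qed
  have Fb: "\<bar>F y\<bar> \<le> (\<eta> * A0 p k b0) * wt e M y" for y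
  proof -
    define w where "w = wt e M y"
    have w0: "0 \<le> w" unfolding w_def using wt_pos[OF e(1), of M y] by simp
    have t1: "\<bar>c * (y ^ (2 * k) * e_b p k b y) * qmi y\<bar> \<le> c * (2 / b0) * (\<eta> * w)"
    proof -
      have "\<bar>y ^ (2 * k) * e_b p k b y\<bar> \<le> 2 / b0"
      proof -
        have ib: "1 / b \<le> 2 / b0" using bl b0 bpos by (simp add: field_simps)
        show ?thesis using order.trans[OF eb_bound[OF p bpos, of y k] ib] .
      qed
      moreover have "\<bar>qmi y\<bar> \<le> \<eta> * w" unfolding qmi_def w_def by (rule hqmi)
      ultimately have "\<bar>y ^ (2 * k) * e_b p k b y\<bar> * \<bar>qmi y\<bar> \<le> (2 / b0) * (\<eta> * w)"
        using b0 by (intro mult_mono) auto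
      then have "c * (\<bar>y ^ (2 * k) * e_b p k b y\<bar> * \<bar>qmi y\<bar>) \<le> c * ((2 / b0) * (\<eta> * w))"
        using c0 by (rule mult_left_mono)
      then show ?thesis by (simp only: abs_mult abs_of_nonneg[OF c0] mult.assoc)
    qed
    have t2: "\<bar>c * qm m * R m y\<bar> \<le> c * CRm p k b0 m * (\<eta> * w)" if m: "m \<le> N" for m
    proof -
      have "\<bar>qm m\<bar> * \<bar>R m y\<bar> \<le> \<eta> * (CRm p k b0 m * w)"
        using hqm[OF m] Rb[OF m, of y] \<eta>0 unfolding qm_def w_def by (intro mult_mono) auto
      then have "c * (\<bar>qm m\<bar> * \<bar>R m y\<bar>) \<le> c * (\<eta> * (CRm p k b0 m * w))"
        using c0 by (rule mult_left_mono)
      then show ?thesis by (simp only: abs_mult abs_of_nonneg[OF c0] mult.assoc mult.left_commute)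
    qed
    have "\<bar>F y\<bar> \<le> \<bar>c * (y ^ (2 * k) * e_b p k b y) * qmi y\<bar> + (\<Sum>m\<le>N. \<bar>c * qm m * R m y\<bar>)"
      unfolding F_def by (rule order.trans[OF abs_triangle_ineq add_left_mono[OF sum_abs]])
    also have "\<dots> \<le> c * (2 / b0) * (\<eta> * w) + (\<Sum>m\<le>N. c * CRm p k b0 m * (\<eta> * w))"
      using t1 t2 by (intro add_mono sum_mono) auto
    also have "\<dots> = (\<eta> * A0 p k b0) * w"
      unfolding A0_def c_def N_def by (simp add: algebra_simps sum_distrib_left sum_distrib_right)
    finally show ?thesis unfolding w_def .
  qed
  have M0: "0 \<le> Mexp p k" using par(5) by simp
  have mM: "real m \<le> Mexp p k" if "m \<le> Mfloor p k" for m
    using that par(2) by (smt (verit) of_nat_le_iff)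
  have KK: "Mexp p k + real (Mfloor p k) \<le> 2 * real (Mfloor p k + 1)" using par(3) by simp
  have Fb': "\<bar>F y\<bar> \<le> (\<eta> * A0 p k b0) * wt (1 / Ifun k s) (Mexp p k) y" for y
    using Fb unfolding e_def I_def M_def .
  have "Pminus p k s (Mcal p k b q) y = Pminus p k s (\<lambda>y. poly G y + F y) y" unfolding dec ..
  also have "\<dots> = Pminus p k s (poly G) y + Pminus p k s F y"
  proof (rule Pminus_add')
    fix m assume m: "m \<le> Mfloor p k"
    show "integrable lborel (\<lambda>y. poly G y * Hpoly k m s y * rho k s y)" by (rule poly_integrable)
    show "integrable lborel (\<lambda>y. F y * Hpoly k m s y * rho k s y)"
      by (rule Pminus_integrable[OF M0 mM[OF m] _ Fmeas Fb', where K="Mfloor p k + 1"])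
         (use KK m mM[OF m] in \<open>simp\<close>)
  qed
  also have "Pminus p k s (poly G) y = 0" using degG unfolding N_def by (rule Pminus_poly)
  finally have "\<bar>Pminus p k s (Mcal p k b q) y\<bar> = \<bar>Pminus p k s F y\<bar>" by simp
  also have "\<dots> \<le> (1 + (\<Sum>m\<le>Mfloor p k. KP m (Mfloor p k + 1))) * (\<eta> * A0 p k b0) * wt (1 / Ifun k s) (Mexp p k) y"
    by (rule Pminus_bound[OF M0 mM KK Fmeas Fb'])
  also have "\<dots> = CC p k b0 * Ifun k s powr (- \<delta>) * wt (1 / Ifun k s) (Mexp p k) y"
    unfolding CC_def \<eta>_def I_def by (simp add: ac_simps)
  finally show ?thesis .
qed


theorem mainTheorem15:
  fixes p b0 :: real and k :: nat
  assumes "p > 1" and "k \<ge> 2" and "b0 > 0"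
  shows "\<exists>\<delta>11 > 0. \<forall>\<delta>. 0 < \<delta> \<and> \<delta> < \<delta>11 \<longrightarrow>
    (\<exists>s11 \<ge> 1. \<exists>C. \<forall>s0 \<ge> s11. \<forall>sbar :: real. \<forall>(q :: real \<Rightarrow> real \<Rightarrow> real) (b :: real \<Rightarrow> real).
       (\<forall>s \<in> {s0..sbar}. (q s, b s) \<in> Vset p k \<delta> b0 s) \<longrightarrow>
       (\<forall>s \<in> {s0..sbar}. \<forall>y :: real.
          \<bar>Pminus p k s (Mcal p k (b s) (q s)) y\<bar>
            \<le> C * Ifun k s powr (- \<delta>) * (Ifun k s powr (- Mexp p k) + \<bar>y\<bar> powr Mexp p k)))"
proof -
  have key: "\<bar>Pminus p k s (Mcal p k (b s) (q s)) y\<bar>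
            \<le> CC p k b0 * Ifun k s powr (- \<delta>) * (Ifun k s powr (- Mexp p k) + \<bar>y\<bar> powr Mexp p k)"
    if d: "0 < \<delta>" and s0: "1 \<le> s0" and V: "\<forall>s \<in> {s0..sbar}. (q s, b s) \<in> Vset p k \<delta> b0 s"
      and s: "s \<in> {s0..sbar}"
    for \<delta> s0 sbar :: real and q :: "real \<Rightarrow> real \<Rightarrow> real" and b :: "real \<Rightarrow> real" and s y :: real
  proof -
    have "(q s, b s) \<in> Vset p k \<delta> b0 s" using V s by blast
    moreover have "0 \<le> s" using s s0 by simp
    ultimately have "\<bar>Pminus p k s (Mcal p k (b s) (q s)) y\<bar> \<le> CC p k b0 * Ifun k s powr (- \<delta>) * wt (1 / Ifun k s) (Mexp p k) y"
      using per_s[OF assms(1) assms(2) assms(3)] d by auto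
    then show ?thesis unfolding wt_eq .
  qed
  show ?thesis
    apply (rule exI[where x=1], rule conjI, simp)
    apply (intro allI impI)
    apply (rule exI[where x=1], rule conjI, simp)
    apply (rule exI[where x="CC p k b0"])
    apply (intro allI impI ballI)
    apply (rule key)
       apply auto
    done
qed

end
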